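(* Let $c_1,c_3,c_5\in\mathbb{R}$ and consider the initial value problem $$\ddot u=-(c_1u+c_3u^3+c_5u^5),\qquad u(0)=1,\quad \dot u(0)=0,$$ whose solution satisfies, for $|u|\le 1$, the time-integral relation $$t=\sqrt{\tfrac32}\int_{u^2}^{1}\frac{ds}{\sqrt{s(1-s)\,h_2(s)}},\qquad h_2(s)=(6c_1+3c_3+2c_5)+(3c_3+2c_5)s+2c_5s^2 .$$ Assume $c_5>0$ and $\Delta:=3c_3^2-4c_5(4c_1+c_3+c_5)\le 0$. Set $$\mathcal P=c_1+c_3+c_5,\qquad \mathcal Q=6c_1+3c_3+2c_5,\qquad \mathcal K=4c_1+3c_3+2c_5,$$ $$A=\frac{\sqrt[4]{6}}{2}\,\frac{1}{\sqrt[4]{\mathcal P\,\mathcal Q}},\qquad B=\frac16\,\frac{\mathcal Q}{\mathcal P},\qquad k^2=\frac12-\frac{\sqrt6}{8}\,\frac{\mathcal K}{\sqrt{\mathcal P\,\mathcal Q}}.$$ Then the solution $u$ of the initial value problem satisfies $$u^2(t)=\frac{\sqrt B}{\sqrt B+\cot^2\!\Big(\tfrac12\,\mathrm{am}\big(2\mathbf K(k)-\tfrac{t}{A},\,k\big)\Big)}.$$ This solution is periodic with period $\mathbb T=8A\,\mathbf K(k)$, and $u(t)$ is positive for $0\le t\le \tfrac14\mathbb T$ and for $\tfrac34\mathbb T\le t\le \mathbb T$, while it is negative for $\tfrac14\mathbb T<t<\tfrac34\mathbb T$.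
   Context: $F(\varphi,k)=\int_0^{\sin\varphi}\frac{ds}{\sqrt{(1-s^2)(1-k^2s^2)}}$ is the incomplete elliptic integral of the first kind with modulus $k$; $\mathrm{am}(\cdot,k)$ is the Jacobi amplitude function, i.e. $\varphi=\mathrm{am}(s,k)$ iff $s=F(\varphi,k)$; $\mathbf K(k)=F(\pi/2,k)$ is the complete elliptic integral of the first kind. *)

theory Defs
  imports "HOL-Analysis.Analysis"
begin

text \<open>Incomplete elliptic integral of the first kind with modulus k, in Legendre's
  trigonometric form F(phi,k) = int_0^phi d theta / sqrt(1 - k^2 sin^2 theta), which for
  |phi| <= pi/2 equals int_0^(sin phi) ds / sqrt((1-s^2)(1-k^2 s^2)) (substitution s = sin theta)
  and is its standard extension to all real phi (needed so that am is defined on all of R).\<close>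
definition ellF :: "real \<Rightarrow> real \<Rightarrow> real" where
  "ellF phi k =
     (if 0 \<le> phi then integral {0..phi} (\<lambda>\<theta>. 1 / sqrt (1 - k\<^sup>2 * (sin \<theta>)\<^sup>2))
      else - integral {phi..0} (\<lambda>\<theta>. 1 / sqrt (1 - k\<^sup>2 * (sin \<theta>)\<^sup>2)))"

definition jacobi_am :: "real \<Rightarrow> real \<Rightarrow> real" where
  "jacobi_am s k = (THE phi. ellF phi k = s)"

definition ellK :: "real \<Rightarrow> real" where
  "ellK k = ellF (pi / 2) k"

end

theory Submission
  imports Defs
begin


definition eg :: "real \<Rightarrow> real \<Rightarrow> real" where
  "eg k \<theta> = 1 / sqrt (1 - k\<^sup>2 * (sin \<theta>)\<^sup>2)"

lemma rad_pos: fixes k \<theta> :: real assumes "k\<^sup>2 < 1" shows "0 < 1 - k\<^sup>2 * (sin \<theta>)\<^sup>2"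
proof -
  have "(sin \<theta>)\<^sup>2 \<le> 1" using sin_cos_squared_add[of \<theta>] by (smt (verit) zero_le_power2)
  then have "k\<^sup>2 * (sin \<theta>)\<^sup>2 \<le> k\<^sup>2" using mult_left_mono[of "(sin \<theta>)\<^sup>2" 1 "k\<^sup>2"] by simp
  then show ?thesis using assms by simp
qed

lemma eg_ge1: assumes "k\<^sup>2 < 1" shows "1 \<le> eg k \<theta>"
proof -
  have p: "0 < 1 - k\<^sup>2 * (sin \<theta>)\<^sup>2" by (rule rad_pos[OF assms])
  have "1 - k\<^sup>2 * (sin \<theta>)\<^sup>2 \<le> 1" by simp
  then have "sqrt (1 - k\<^sup>2 * (sin \<theta>)\<^sup>2) \<le> 1" by simp
  moreover have "0 < sqrt (1 - k\<^sup>2 * (sin \<theta>)\<^sup>2)" using p by simp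
  ultimately show ?thesis unfolding eg_def by (simp add: field_simps)
qed

lemma eg_cont: assumes "k\<^sup>2 < 1" shows "continuous_on S (eg k)"
proof -
  have "continuous_on S (\<lambda>\<theta>. 1 / sqrt (1 - k\<^sup>2 * (sin \<theta>)\<^sup>2))"
  proof (intro continuous_intros ballI)
    fix \<theta> show "sqrt (1 - k\<^sup>2 * (sin \<theta>)\<^sup>2) \<noteq> 0" using rad_pos[OF assms, of \<theta>] by simp
  qed
  then show ?thesis by (simp add: eg_def[abs_def])
qed

lemma ellF_eg: "ellF \<phi> k = (if 0 \<le> \<phi> then integral {0..\<phi>} (eg k) else - integral {\<phi>..0} (eg k))"
  by (simp add: ellF_def eg_def[abs_def])

lemma ellF_deriv: assumes hk: "k\<^sup>2 < 1"
  shows "((\<lambda>\<phi>. ellF \<phi> k) has_real_derivative eg k x) (at x)"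
proof -
  define a where "a = min 0 x - 1"
  define b where "b = max 0 x + 1"
  have ax: "a < x" unfolding a_def by (simp add: min_less_iff_disj)
  have xb: "x < b" unfolding b_def by (simp add: less_max_iff_disj)
  have a0: "a < 0" unfolding a_def by (simp add: min_less_iff_disj)
  have b0: "0 < b" unfolding b_def by (simp add: less_max_iff_disj)
  have cont: "continuous_on {a..b} (eg k)" by (rule eg_cont[OF hk])
  have int: "eg k integrable_on {a..b}" by (rule integrable_continuous_real[OF cont])
  have eq: "integral {a..\<phi>} (eg k) - integral {a..0} (eg k) = ellF \<phi> k" if "\<phi> \<in> {a<..<b}" for \<phi>
  proof (cases "0 \<le> \<phi>")
    case True
    have "eg k integrable_on {a..\<phi>}"
      by (rule integrable_continuous_real[OF eg_cont[OF hk]])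
    then have "integral {a..0} (eg k) + integral {0..\<phi>} (eg k) = integral {a..\<phi>} (eg k)"
      using Henstock_Kurzweil_Integration.integral_combine[of a 0 \<phi> "eg k"] True a0 by linarith
    then show ?thesis using True by (simp add: ellF_eg)
  next
    case False
    have "eg k integrable_on {a..0}"
      by (rule integrable_continuous_real[OF eg_cont[OF hk]])
    then have "integral {a..\<phi>} (eg k) + integral {\<phi>..0} (eg k) = integral {a..0} (eg k)"
      using Henstock_Kurzweil_Integration.integral_combine[of a \<phi> 0 "eg k"] False that by auto
    then show ?thesis using False by (simp add: ellF_eg)
  qed
  have xin: "x \<in> {a..b}" using ax xb by simp
  have "((\<lambda>\<phi>. integral {a..\<phi>} (eg k)) has_real_derivative eg k x) (at x within {a..b})"
    by (rule integral_has_real_derivative[OF cont xin])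
  moreover have "x \<in> interior {a..b}" using ax xb by simp
  ultimately have d1: "((\<lambda>\<phi>. integral {a..\<phi>} (eg k)) has_real_derivative eg k x) (at x)"
    by (metis at_within_interior)
  have "((\<lambda>\<phi>. integral {a..\<phi>} (eg k) - integral {a..0} (eg k)) has_real_derivative eg k x) (at x)"
    using DERIV_diff[OF d1 DERIV_const[of "integral {a..0} (eg k)" "at x"]] by simp
  then show ?thesis
    by (rule has_field_derivative_transform_within_open[where S="{a<..<b}"]) (use eq ax xb in auto)
qed

lemma ellF_0: "ellF 0 k = 0"
  by (simp add: ellF_def)

lemma ellF_cont: assumes hk: "k\<^sup>2 < 1" shows "continuous_on S (\<lambda>\<phi>. ellF \<phi> k)"
  by (intro continuous_at_imp_continuous_on ballI DERIV_isCont[OF ellF_deriv[OF hk]])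

lemma ellF_ge: assumes hk: "k\<^sup>2 < 1" and "x \<le> y" shows "y - x \<le> ellF y k - ellF x k"
proof -
  have "(\<lambda>\<phi>. ellF \<phi> k - \<phi>) x \<le> (\<lambda>\<phi>. ellF \<phi> k - \<phi>) y"
  proof (rule DERIV_nonneg_imp_nondecreasing[OF assms(2)])
    fix z
    show "\<exists>d. ((\<lambda>\<phi>. ellF \<phi> k - \<phi>) has_real_derivative d) (at z) \<and> 0 \<le> d"
      using DERIV_diff[OF ellF_deriv[OF hk, of z] DERIV_ident] eg_ge1[OF hk, of z] by auto
  qed
  then show ?thesis by simp
qed

lemma ellF_less: assumes hk: "k\<^sup>2 < 1" and "x < y" shows "ellF x k < ellF y k"
  using ellF_ge[OF hk, of x y] assms by simp

lemma ellF_le_iff: assumes hk: "k\<^sup>2 < 1" shows "ellF x k \<le> ellF y k \<longleftrightarrow> x \<le> y"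
  using ellF_ge[OF hk, of x y] ellF_less[OF hk, of y x] by (cases "x \<le> y") auto

lemma ellF_surj: assumes hk: "k\<^sup>2 < 1" shows "\<exists>\<phi>. ellF \<phi> k = s"
proof -
  have "ellF (-\<bar>s\<bar>) k \<le> s" using ellF_ge[OF hk, of "-\<bar>s\<bar>" 0] by (simp add: ellF_0)
  moreover have "s \<le> ellF \<bar>s\<bar> k" using ellF_ge[OF hk, of 0 "\<bar>s\<bar>"] by (simp add: ellF_0)
  ultimately show ?thesis using IVT'[of "\<lambda>\<phi>. ellF \<phi> k" "-\<bar>s\<bar>" s "\<bar>s\<bar>"] ellF_cont[OF hk] by auto
qed

lemma ellF_am: assumes hk: "k\<^sup>2 < 1" shows "ellF (jacobi_am s k) k = s"
proof -
  have "\<exists>!\<phi>. ellF \<phi> k = s"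
    using ellF_surj[OF hk, of s] ellF_less[OF hk] by (metis linorder_neqE_linordered_idom order_less_irrefl)
  then show ?thesis unfolding jacobi_am_def by (rule theI')
qed

lemma am_ellF: assumes hk: "k\<^sup>2 < 1" shows "jacobi_am (ellF \<phi> k) k = \<phi>"
  using ellF_am[OF hk, of "ellF \<phi> k"] ellF_less[OF hk] by (metis linorder_neqE_linordered_idom order_less_irrefl)

lemma am_less: assumes hk: "k\<^sup>2 < 1" and "s < t" shows "jacobi_am s k < jacobi_am t k"
  using ellF_le_iff[OF hk, of "jacobi_am t k" "jacobi_am s k"] ellF_am[OF hk] assms(2) by (metis not_le)

lemma am_0: assumes hk: "k\<^sup>2 < 1" shows "jacobi_am 0 k = 0"
  using am_ellF[OF hk, of 0] by (simp add: ellF_0)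

lemma eg_shift: "eg k (x + pi) = eg k x" by (simp add: eg_def)
lemma eg_refl: "eg k (pi - x) = eg k x" by (simp add: eg_def)

lemma ellF_pi: assumes hk: "k\<^sup>2 < 1" shows "ellF pi k = 2 * ellK k"
proof -
  have "\<forall>x. ((\<lambda>\<phi>. ellF \<phi> k + ellF (pi - \<phi>) k) has_real_derivative 0) (at x)"
  proof
    fix x
    have "((\<lambda>\<phi>. ellF (pi - \<phi>) k) has_real_derivative eg k (pi - x) * (0 - 1)) (at x)"
      by (rule DERIV_chain2[OF ellF_deriv[OF hk] DERIV_diff[OF DERIV_const DERIV_ident]])
    from DERIV_add[OF ellF_deriv[OF hk, of x] this] show "((\<lambda>\<phi>. ellF \<phi> k + ellF (pi - \<phi>) k) has_real_derivative 0) (at x)"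
      by (simp add: eg_refl)
  qed
  from DERIV_isconst_all[OF this, of 0 "pi/2"] show ?thesis by (simp add: ellF_0 ellK_def)
qed

lemma ellF_shift: assumes hk: "k\<^sup>2 < 1" shows "ellF (\<phi> + pi) k = ellF \<phi> k + 2 * ellK k"
proof -
  have "\<forall>x. ((\<lambda>\<phi>. ellF (\<phi> + pi) k - ellF \<phi> k) has_real_derivative 0) (at x)"
  proof
    fix x
    have "((\<lambda>\<phi>. ellF (\<phi> + pi) k) has_real_derivative eg k (x + pi) * (1 + 0)) (at x)"
      by (rule DERIV_chain2[OF ellF_deriv[OF hk] DERIV_add[OF DERIV_ident DERIV_const]])
    from DERIV_diff[OF this ellF_deriv[OF hk, of x]] show "((\<lambda>\<phi>. ellF (\<phi> + pi) k - ellF \<phi> k) has_real_derivative 0) (at x)"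
      by (simp add: eg_shift)
  qed
  from DERIV_isconst_all[OF this, of \<phi> 0] show ?thesis by (simp add: ellF_0 ellF_pi[OF hk])
qed

lemma am_shift: assumes hk: "k\<^sup>2 < 1" shows "jacobi_am (s + 2 * ellK k) k = jacobi_am s k + pi"
  using am_ellF[OF hk, of "jacobi_am s k + pi"] ellF_shift[OF hk, of "jacobi_am s k"] ellF_am[OF hk, of s] by simp

lemma ellK_pos: assumes hk: "k\<^sup>2 < 1" shows "pi / 2 \<le> ellK k"
  using ellF_ge[OF hk, of 0 "pi/2"] by (simp add: ellF_0 ellK_def)

lemma am_deriv: assumes hk: "k\<^sup>2 < 1"
  shows "((\<lambda>s. jacobi_am s k) has_real_derivative sqrt (1 - k\<^sup>2 * (sin (jacobi_am s k))\<^sup>2)) (at s)"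
proof -
  have c: "isCont (\<lambda>s. jacobi_am s k) (ellF (jacobi_am s k) k)"
    by (rule isCont_inverse_function[where d=1 and f="\<lambda>\<phi>. ellF \<phi> k"])
       (auto simp: am_ellF[OF hk] intro: DERIV_isCont[OF ellF_deriv[OF hk]])
  have "((\<lambda>s. jacobi_am s k) has_real_derivative inverse (eg k (jacobi_am s k))) (at s)"
    by (rule DERIV_inverse_function[where f="\<lambda>\<phi>. ellF \<phi> k" and a="s - 1" and b="s + 1"])
       (use ellF_deriv[OF hk] eg_ge1[OF hk, of "jacobi_am s k"] ellF_am[OF hk] c in auto)
  then show ?thesis by (simp add: eg_def)
qed



lemma loc_lip:
  fixes F F' :: "real \<Rightarrow> real"
  assumes Fd: "\<And>x. (F has_real_derivative F' x) (at x)" and Fc: "continuous_on UNIV F'"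
  shows "\<exists>L\<ge>0. \<forall>a b. \<bar>a\<bar> \<le> M \<longrightarrow> \<bar>b\<bar> \<le> M \<longrightarrow> \<bar>F a - F b\<bar> \<le> L * \<bar>a - b\<bar>"
proof -
  have "compact (F' ` {-M..M})"
    by (rule compact_continuous_image[OF continuous_on_subset[OF Fc]]) auto
  then obtain L0 where L0: "\<And>x. x \<in> {-M..M} \<Longrightarrow> \<bar>F' x\<bar> \<le> L0"
    using compact_imp_bounded bounded_real by (metis image_eqI)
  define L where "L = max L0 0"
  have L: "\<And>x. x \<in> {-M..M} \<Longrightarrow> \<bar>F' x\<bar> \<le> L" using L0 unfolding L_def by fastforce
  have key: "\<bar>F b - F a\<bar> \<le> L * \<bar>b - a\<bar>" if "a < b" "\<bar>a\<bar> \<le> M" "\<bar>b\<bar> \<le> M" for a b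
  proof -
    obtain z where z: "a < z" "z < b" "F b - F a = (b - a) * F' z"
      using MVT2[OF \<open>a < b\<close>, of F F'] Fd by blast
    have "z \<in> {-M..M}" using that z by (auto simp: abs_le_iff)
    then have "\<bar>F' z\<bar> \<le> L" using L by blast
    then have "\<bar>b - a\<bar> * \<bar>F' z\<bar> \<le> \<bar>b - a\<bar> * L" by (intro mult_left_mono) auto
    then show ?thesis using z(3) by (simp add: abs_mult mult.commute)
  qed
  show ?thesis
  proof (intro exI[of _ L] conjI allI impI)
    show "0 \<le> L" by (simp add: L_def)
    fix a b :: real assume ab: "\<bar>a\<bar> \<le> M" "\<bar>b\<bar> \<le> M"
    show "\<bar>F a - F b\<bar> \<le> L * \<bar>a - b\<bar>"
    proof (cases a b rule: linorder_cases)
      case less then show ?thesis using key[of a b] ab by (simp add: abs_minus_commute)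
    next
      case greater then show ?thesis using key[of b a] ab by simp
    qed simp
  qed
qed

lemma ode2_unique:
  fixes F F' y1 d1 y2 d2 :: "real \<Rightarrow> real"
  assumes D1: "\<And>t. (y1 has_real_derivative d1 t) (at t)"
      and D1': "\<And>t. (d1 has_real_derivative F (y1 t)) (at t)"
      and D2: "\<And>t. (y2 has_real_derivative d2 t) (at t)"
      and D2': "\<And>t. (d2 has_real_derivative F (y2 t)) (at t)"
      and Fd: "\<And>x. (F has_real_derivative F' x) (at x)" and Fc: "continuous_on UNIV F'"
      and i1: "y1 t0 = y2 t0" and i2: "d1 t0 = d2 t0"
  shows "y1 t = y2 t"
proof -
  define a where "a = min t t0"
  define b where "b = max t t0"
  have c1: "continuous_on {a..b} y1" using D1 by (meson DERIV_isCont continuous_at_imp_continuous_on)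
  have c2: "continuous_on {a..b} y2" using D2 by (meson DERIV_isCont continuous_at_imp_continuous_on)
  obtain M1 where M1: "\<And>s. s \<in> {a..b} \<Longrightarrow> \<bar>y1 s\<bar> \<le> M1"
    using compact_imp_bounded[OF compact_continuous_image[OF c1 compact_Icc]] bounded_real by (metis image_eqI)
  obtain M2 where M2: "\<And>s. s \<in> {a..b} \<Longrightarrow> \<bar>y2 s\<bar> \<le> M2"
    using compact_imp_bounded[OF compact_continuous_image[OF c2 compact_Icc]] bounded_real by (metis image_eqI)
  define M where "M = max M1 M2"
  obtain L where L0: "L \<ge> 0" and L: "\<And>x y. \<bar>x\<bar> \<le> M \<Longrightarrow> \<bar>y\<bar> \<le> M \<Longrightarrow> \<bar>F x - F y\<bar> \<le> L * \<bar>x - y\<bar>"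
    using loc_lip[OF Fd Fc, of M] by blast
  define C where "C = 1 + L"
  define E where "E s = (y1 s - y2 s)\<^sup>2 + (d1 s - d2 s)\<^sup>2" for s
  define E' where "E' s = 2 * (y1 s - y2 s) * (d1 s - d2 s) + 2 * (d1 s - d2 s) * (F (y1 s) - F (y2 s))" for s
  have dE: "(E has_real_derivative E' s) (at s)" for s
    unfolding E_def[abs_def] E'_def
    by (rule derivative_eq_intros D1 D1' D2 D2' refl | simp)+ (simp add: algebra_simps)
  have bnd: "\<bar>E' s\<bar> \<le> C * E s" if "s \<in> {a..b}" for s
  proof -
    define e where "e = y1 s - y2 s"
    define f where "f = d1 s - d2 s"
    have lf: "\<bar>F (y1 s) - F (y2 s)\<bar> \<le> L * \<bar>e\<bar>"
      using L[of "y1 s" "y2 s"] M1[OF that] M2[OF that] unfolding e_def M_def by linarith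
    have "\<bar>E' s\<bar> \<le> \<bar>2 * e * f\<bar> + \<bar>2 * f * (F (y1 s) - F (y2 s))\<bar>"
      unfolding E'_def e_def f_def by linarith
    also have "\<bar>2 * f * (F (y1 s) - F (y2 s))\<bar> \<le> 2 * \<bar>f\<bar> * (L * \<bar>e\<bar>)"
      by (simp add: abs_mult mult_left_mono lf)
    also have "\<bar>2 * e * f\<bar> \<le> e\<^sup>2 + f\<^sup>2"
      using sum_squares_bound[of e f] sum_squares_bound[of e "-f"] by (simp add: abs_mult abs_if split: if_splits) 
    also have "2 * \<bar>f\<bar> * (L * \<bar>e\<bar>) \<le> L * (e\<^sup>2 + f\<^sup>2)"
    proof -
      have "2 * \<bar>f\<bar> * \<bar>e\<bar> \<le> e\<^sup>2 + f\<^sup>2" using sum_squares_bound[of "\<bar>e\<bar>" "\<bar>f\<bar>"] by (simp add: mult_ac)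
      from mult_left_mono[OF this L0] show ?thesis by (simp add: algebra_simps)
    qed
    finally show ?thesis unfolding C_def E_def e_def f_def by (simp add: algebra_simps)
  qed
  have E0: "E t0 = 0" using i1 i2 by (simp add: E_def)
  have Enn: "0 \<le> E s" for s by (simp add: E_def)
  have "E t \<le> 0"
  proof (cases "t0 \<le> t")
    case True
    then have ab: "a = t0" "b = t" by (auto simp: a_def b_def)
    have "(\<lambda>s. E s * exp (- C * (s - t0))) t0 \<ge> (\<lambda>s. E s * exp (- C * (s - t0))) t"
    proof (rule DERIV_nonpos_imp_nonincreasing[OF True])
      fix x assume x: "t0 \<le> x" "x \<le> t"
      have "((\<lambda>s. E s * exp (- C * (s - t0))) has_real_derivative (E' x - C * E x) * exp (- C * (x - t0))) (at x)"
        by (rule derivative_eq_intros dE refl | simp)+ (simp add: algebra_simps)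
      moreover have "E' x - C * E x \<le> 0" using bnd[of x] x ab by simp
      ultimately show "\<exists>y. ((\<lambda>s. E s * exp (- C * (s - t0))) has_real_derivative y) (at x) \<and> y \<le> 0"
        by (intro exI conjI) (auto simp: mult_nonpos_nonneg)
    qed
    then show ?thesis using E0 by (simp add: mult_le_0_iff)
  next
    case False
    then have ab: "a = t" "b = t0" by (auto simp: a_def b_def)
    have "(\<lambda>s. E s * exp (C * (s - t0))) t \<le> (\<lambda>s. E s * exp (C * (s - t0))) t0"
    proof (rule DERIV_nonneg_imp_nondecreasing[of t t0 "\<lambda>s. E s * exp (C * (s - t0))"])
      show "t \<le> t0" using False by simp
    next
      fix x assume x: "t \<le> x" "x \<le> t0"
      have "((\<lambda>s. E s * exp (C * (s - t0))) has_real_derivative (E' x + C * E x) * exp (C * (x - t0))) (at x)"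
        by (rule derivative_eq_intros dE refl | simp)+ (simp add: algebra_simps)
      moreover have "0 \<le> E' x + C * E x" using bnd[of x] x ab by simp
      ultimately show "\<exists>y. ((\<lambda>s. E s * exp (C * (s - t0))) has_real_derivative y) (at x) \<and> 0 \<le> y"
        by (intro exI[of _ "(E' x + C * E x) * exp (C * (x - t0))"] conjI) auto
    qed
    then show ?thesis using E0 by (simp add: mult_le_0_iff)
  qed
  then have "E t = 0" using Enn[of t] by simp
  then show ?thesis unfolding E_def by (simp add: add_nonneg_eq_0_iff)
qed


lemma key_id:
  fixes P b K c :: real
  assumes "P > 0" "b > 0"
  shows "2*b*(4*P*b)*((c*((b+1)+(1-b)*c)+2*(1-b)*(1-c^2))*(1-(1/2 - K/(8*P*b))*(1-c^2))-(1/2 - K/(8*P*b))*(1-c^2)*c*((b+1)+(1-b)*c))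
     = (6*P*b^2)/3*((b+1)+(1-b)*c)^3-4*((6*P*b^2-K)/2)*b*(1-c)*((b+1)+(1-b)*c)^2-3*(2*K-6*P*b^2-2*P)*b^2*(1-c)^2*((b+1)+(1-b)*c)-8/3*(3*P+3*P*b^2-3*K/2)*b^3*(1-c)^3"
  using assms by (simp add: field_simps power2_eq_square power3_eq_cube)

lemma root4_sq: assumes "0 \<le> x" shows "(root 4 x)\<^sup>2 = sqrt x"
proof -
  have "root 4 x = root 2 (root 2 x)" using real_root_mult_exp[of 2 2 x] by simp
  moreover have "0 \<le> root 2 x" using assms by simp
  ultimately show ?thesis using real_root_pow_pos2[of 2 "root 2 x"] by (simp add: sqrt_def)
qed

lemma cos_ne1:
  fixes m :: int
  assumes "real_of_int m * 2 * pi < x" "x < real_of_int (m + 1) * 2 * pi"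
  shows "cos x \<noteq> 1"
proof
  assume "cos x = 1"
  then obtain n :: int where n: "x = real_of_int n * 2 * pi" using cos_one_2pi_int by blast
  have "real_of_int m * (2 * pi) < real_of_int n * (2 * pi)" using assms(1) n by (simp add: mult.assoc)
  then have "m < n" by (simp add: mult_less_cancel_right_pos)
  have "real_of_int n * (2 * pi) < real_of_int (m + 1) * (2 * pi)" using assms(2) n by (simp add: mult.assoc)
  then have "n < m + 1" by (simp add: mult_less_cancel_right_pos)
  with \<open>m < n\<close> show False by simp
qed

lemma sign_keep:
  fixes u :: "real \<Rightarrow> real"
  assumes c: "\<And>x. isCont u x" and nz: "\<And>x. min a t \<le> x \<Longrightarrow> x \<le> max a t \<Longrightarrow> u x \<noteq> 0" and pos: "u a > 0"
  shows "u t > 0"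
proof (rule ccontr)
  assume "\<not> u t > 0"
  then have ut: "u t \<le> 0" by simp
  have co: "continuous_on S u" for S using c by (simp add: continuous_at_imp_continuous_on)
  show False
  proof (cases "a \<le> t")
    case True
    then obtain x where "a \<le> x" "x \<le> t" "u x = 0" using IVT2'[of u t 0 a] ut pos co by fastforce
    then show False using nz[of x] True by simp
  next
    case False
    then obtain x where "t \<le> x" "x \<le> a" "u x = 0" using IVT'[of u t 0 a] ut pos co by fastforce
    then show False using nz[of x] False by simp
  qed
qed

lemma dz_alg:
  fixes s c R A b k2 P KK :: real
  assumes sc: "s\<^sup>2 + c\<^sup>2 = 1" and R2: "R\<^sup>2 = 1 - k2 * s\<^sup>2" and Nnz: "b + 1 + (1 - b) * c \<noteq> 0"
    and A0: "A > 0" and A2: "A\<^sup>2 = 1 / (4 * P * b)" and k2: "k2 = 1/2 - KK / (8 * P * b)"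
    and P0: "P > 0" and b0: "b > 0"
  shows "(((0 * s + c * (- R / A) * (- 2 * b / A)) * R +
       k2 * s * c / A * (- 2 * b / A * s)) *
      (b + 1 + (1 - b) * c)\<^sup>2 -
      - 2 * b / A * s * R *
      (real 2 *
       ((0 + (0 * c + - s * (- R / A) * (1 - b))) *
        (b + 1 + (1 - b) * c) ^ (2 - Suc 0)))) /
     ((b + 1 + (1 - b) * c)\<^sup>2 * (b + 1 + (1 - b) * c)\<^sup>2) =
     (6*P*b\<^sup>2) / 3 - 4 * ((6*P*b\<^sup>2 - KK)/2) * (b * (1 - c) / (b + 1 + (1 - b) * c))
     - 3 * (2*KK - 6*P*b\<^sup>2 - 2*P) * (b * (1 - c) / (b + 1 + (1 - b) * c))\<^sup>2
     - 8 / 3 * (3*P + 3*P*b\<^sup>2 - 3*KK/2) * (b * (1 - c) / (b + 1 + (1 - b) * c)) ^ 3"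
proof -
  define N where "N = b + 1 + (1 - b) * c"
  have N0: "N \<noteq> 0" using Nnz by (simp add: N_def)
  have s2: "s\<^sup>2 = 1 - c\<^sup>2" using sc by simp
  have iA: "1 / A\<^sup>2 = 4 * P * b" using A2 by simp
  have "(((0 * s + c * (- R / A) * (- 2 * b / A)) * R +
       k2 * s * c / A * (- 2 * b / A * s)) * N\<^sup>2 -
      - 2 * b / A * s * R * (real 2 * ((0 + (0 * c + - s * (- R / A) * (1 - b))) * N ^ (2 - Suc 0)))) /
     (N\<^sup>2 * N\<^sup>2) = 2 * b * (1 / A\<^sup>2) * ((c * N + 2 * (1 - b) * s\<^sup>2) * R\<^sup>2 - k2 * s\<^sup>2 * c * N) / N ^ 3"
    using N0 A0 by (simp add: field_simps power2_eq_square power3_eq_cube)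
  also have "\<dots> = 2 * b * (4 * P * b) * ((c * N + 2 * (1 - b) * (1 - c\<^sup>2)) * (1 - (1/2 - KK / (8 * P * b)) * (1 - c\<^sup>2)) - (1/2 - KK / (8 * P * b)) * (1 - c\<^sup>2) * c * N) / N ^ 3"
    unfolding iA R2 s2 k2 ..
  also have "\<dots> = ((6*P*b\<^sup>2)/3*N^3-4*((6*P*b\<^sup>2-KK)/2)*b*(1-c)*N\<^sup>2-3*(2*KK-6*P*b\<^sup>2-2*P)*b\<^sup>2*(1-c)\<^sup>2*N-8/3*(3*P+3*P*b\<^sup>2-3*KK/2)*b^3*(1-c)^3) / N ^ 3"
    using key_id[OF P0 b0, where K=KK and c=c] unfolding N_def by simp
  also have "\<dots> = (6*P*b\<^sup>2) / 3 - 4 * ((6*P*b\<^sup>2 - KK)/2) * (b * (1 - c) / N)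
     - 3 * (2*KK - 6*P*b\<^sup>2 - 2*P) * (b * (1 - c) / N)\<^sup>2
     - 8 / 3 * (3*P + 3*P*b\<^sup>2 - 3*KK/2) * (b * (1 - c) / N) ^ 3"
    using N0 by (simp add: field_simps power2_eq_square power3_eq_cube)
  finally show ?thesis unfolding N_def .
qed

lemma cot_form:
  fixes b x :: real
  assumes b0: "b > 0" and s0: "sin x \<noteq> 0"
  shows "b * (1 - cos (2 * x)) / ((b + 1) + (1 - b) * cos (2 * x)) = b / (b + (cot x)\<^sup>2)"
proof -
  define s where "s = sin x"
  define c where "c = cos x"
  have c2: "c\<^sup>2 = 1 - s\<^sup>2" using sin_cos_squared_add[of x] unfolding s_def c_def by linarith
  have cd: "cos (2 * x) = 1 - 2 * s\<^sup>2" unfolding s_def by (rule cos_double_sin)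
  have n: "1 - cos (2 * x) = 2 * s\<^sup>2" using cd by simp
  have d: "(b + 1) + (1 - b) * cos (2 * x) = 2 * (b * s\<^sup>2 + c\<^sup>2)" unfolding cd c2 by (simp add: algebra_simps)
  have sp: "0 < s\<^sup>2" using s0 unfolding s_def by simp
  have pos: "0 < b * s\<^sup>2 + c\<^sup>2" using b0 sp by (simp add: add_pos_nonneg)
  have "b * (1 - cos (2 * x)) / ((b + 1) + (1 - b) * cos (2 * x)) = b * s\<^sup>2 / (b * s\<^sup>2 + c\<^sup>2)"
    unfolding n d using pos by (simp add: field_simps)
  also have "\<dots> = b / (b + (cot x)\<^sup>2)"
    unfolding cot_def using sp pos s0 by (simp add: s_def c_def field_simps power2_eq_square)
  finally show ?thesis .
qed

theorem theorem1:
  fixes c1 c3 c5 :: real and u u' :: "real \<Rightarrow> real"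
  assumes c5_pos: "c5 > 0"
    and Delta: "3 * c3\<^sup>2 - 4 * c5 * (4 * c1 + c3 + c5) \<le> 0"
    and P_pos: "c1 + c3 + c5 > 0"
    and Q_pos: "6 * c1 + 3 * c3 + 2 * c5 > 0"
    and k2_lt1: "1/2 - sqrt 6 / 8 * (4 * c1 + 3 * c3 + 2 * c5)
                   / sqrt ((c1 + c3 + c5) * (6 * c1 + 3 * c3 + 2 * c5)) < 1"
    and du: "\<And>t. (u has_real_derivative u' t) (at t)"
    and ddu: "\<And>t. (u' has_real_derivative - (c1 * u t + c3 * (u t)^3 + c5 * (u t)^5)) (at t)"
    and init_u: "u 0 = 1"
    and init_du: "u' 0 = 0"
  shows
    "let P = c1 + c3 + c5; Q = 6 * c1 + 3 * c3 + 2 * c5; K = 4 * c1 + 3 * c3 + 2 * c5;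
         A = root 4 6 / 2 * (1 / root 4 (P * Q));
         B = Q / (6 * P);
         k = sqrt (1/2 - sqrt 6 / 8 * K / sqrt (P * Q));
         T = 8 * A * ellK k
     in (\<forall>t. sin (jacobi_am (2 * ellK k - t / A) k / 2) \<noteq> 0 \<longrightarrow>
            (u t)\<^sup>2 = sqrt B / (sqrt B + (cot (jacobi_am (2 * ellK k - t / A) k / 2))\<^sup>2))
      \<and> T > 0 \<and> (\<forall>t. u (t + T) = u t)
      \<and> (\<forall>t. 0 \<le> t \<and> t < T / 4 \<longrightarrow> u t > 0)
      \<and> (\<forall>t. 3 * T / 4 < t \<and> t \<le> T \<longrightarrow> u t > 0)
      \<and> (\<forall>t. T / 4 < t \<and> t < 3 * T / 4 \<longrightarrow> u t < 0)"
proof -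
  define P where "P = c1 + c3 + c5"
  define Q where "Q = 6 * c1 + 3 * c3 + 2 * c5"
  define KK where "KK = 4 * c1 + 3 * c3 + 2 * c5"
  define A where "A = root 4 6 / 2 * (1 / root 4 (P * Q))"
  define B where "B = Q / (6 * P)"
  define k where "k = sqrt (1/2 - sqrt 6 / 8 * KK / sqrt (P * Q))"
  define Kc where "Kc = ellK k"
  define T where "T = 8 * A * Kc"
  have P0: "P > 0" using P_pos by (simp add: P_def)
  have Q0: "Q > 0" using Q_pos by (simp add: Q_def)
  define b where "b = sqrt B"
  have b0: "b > 0" using P0 Q0 by (simp add: b_def B_def)
  have Qb: "Q = 6 * P * b\<^sup>2" using P0 Q0 by (simp add: b_def B_def)
  have sPQ: "sqrt (P * Q) = sqrt 6 * P * b"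
  proof -
    have e1: "(sqrt 6 * P * b)\<^sup>2 = 6 * P\<^sup>2 * b\<^sup>2" by (simp add: power_mult_distrib)
    have "P * Q = (sqrt 6 * P * b)\<^sup>2" unfolding e1 Qb by (simp add: power2_eq_square algebra_simps)
    then have "sqrt (P * Q) = \<bar>sqrt 6 * P * b\<bar>" by (metis real_sqrt_abs)
    then show ?thesis using P0 b0 by simp
  qed
  have A0: "A > 0" using P0 Q0 by (simp add: A_def)
  have A2: "A\<^sup>2 = 1 / (4 * P * b)"
  proof -
    have "A\<^sup>2 = (root 4 6)\<^sup>2 / 4 * (1 / (root 4 (P * Q))\<^sup>2)" by (simp add: A_def power_mult_distrib power_divide)
    also have "\<dots> = sqrt 6 / 4 * (1 / sqrt (P * Q))" using P0 Q0 by (simp add: root4_sq)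
    also have "\<dots> = 1 / (4 * P * b)" using sPQ P0 b0 by (simp add: field_simps)
    finally show ?thesis .
  qed
  define k2 where "k2 = 1/2 - KK / (8 * P * b)"
  have k2_eq: "1/2 - sqrt 6 / 8 * KK / sqrt (P * Q) = k2"
    unfolding k2_def sPQ using P0 b0 by (simp add: field_simps)
  have k2_lt: "k2 < 1" using k2_lt1[folded P_def Q_def KK_def] k2_eq by linarith
  have k2_ge: "0 \<le> k2"
  proof -
    have "KK \<le> 4 * P * b"
    proof (cases "KK \<le> 0")
      case True then show ?thesis using mult_pos_pos[of "4 * P" b] P0 b0 by linarith
    next
      case False
      have i1: "8 * (P * Q) - 3 * KK\<^sup>2 = -(3 * c3\<^sup>2 - 4 * c5 * (4 * c1 + c3 + c5))"
        unfolding KK_def P_def Q_def by (simp add: power2_eq_square algebra_simps)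
      have i2: "(4 * P * b)\<^sup>2 = 8 / 3 * (P * Q)"
        unfolding Qb by (simp add: power2_eq_square algebra_simps)
      have "KK\<^sup>2 \<le> (4 * P * b)\<^sup>2" using i1 i2 Delta by linarith
      moreover have "0 \<le> 4 * P * b" using P0 b0 by simp
      ultimately show ?thesis by (rule power2_le_imp_le)
    qed
    moreover have "0 < 8 * P * b" using P0 b0 by simp
    ultimately have "KK / (8 * P * b) \<le> 1/2" by (simp add: pos_divide_le_eq)
    then show ?thesis by (simp add: k2_def)
  qed
  have kk: "k\<^sup>2 = k2" using k2_ge k2_eq by (simp add: k_def)
  have hk: "k\<^sup>2 < 1" using kk k2_lt by simp
  have Kc0: "Kc > 0" using ellK_pos[OF hk] pi_gt_zero unfolding Kc_def by linarith
  have T0: "T > 0" using A0 Kc0 by (simp add: T_def)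
  define phi where "phi = (\<lambda>t. jacobi_am (2 * Kc - t / A) k)"
  define R where "R = (\<lambda>t. sqrt (1 - k\<^sup>2 * (sin (phi t))\<^sup>2))"
  have Rpos: "\<And>t. 0 < 1 - k\<^sup>2 * (sin (phi t))\<^sup>2" using rad_pos[OF hk] by blast
  have R0: "\<And>t. 0 < R t" using Rpos by (simp add: R_def)
  have R2: "\<And>t. (R t)\<^sup>2 = 1 - k\<^sup>2 * (sin (phi t))\<^sup>2" using Rpos by (simp add: R_def less_imp_le)
  have phiD: "(phi has_real_derivative - R t / A) (at t)" for t
  proof -
    have "((\<lambda>t. 2 * Kc - t / A) has_real_derivative 0 - 1 / A) (at t)"
      by (intro DERIV_diff DERIV_const DERIV_cdivide DERIV_ident)
    from DERIV_chain2[OF am_deriv[OF hk] this] show ?thesis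
      by (simp add: phi_def R_def)
  qed
  have RD: "(R has_real_derivative k\<^sup>2 * sin (phi t) * cos (phi t) / A) (at t)" for t
  proof -
    have gD: "((\<lambda>t. 1 - k\<^sup>2 * (sin (phi t))\<^sup>2) has_real_derivative - (k\<^sup>2 * (2 * sin (phi t) * (cos (phi t) * (- R t / A))))) (at t)"
      by (rule derivative_eq_intros phiD refl)+ (simp add: power2_eq_square algebra_simps)
    from DERIV_chain2[OF DERIV_real_sqrt[OF Rpos[of t]] gD]
    have d: "(R has_real_derivative inverse (R t) / 2 * - (k\<^sup>2 * (2 * sin (phi t) * (cos (phi t) * (- R t / A))))) (at t)"
      by (simp add: R_def[symmetric] o_def) (simp add: R_def)
    have e: "inverse (R t) / 2 * - (k\<^sup>2 * (2 * sin (phi t) * (cos (phi t) * (- R t / A)))) = k\<^sup>2 * sin (phi t) * cos (phi t) / A"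
      using R0[of t] by (simp add: field_simps)
    show ?thesis using d unfolding e .
  qed
  define N where "N = (\<lambda>t. (b + 1) + (1 - b) * cos (phi t))"
  have N0: "N t > 0" for t
  proof -
    have e: "N t = b * (1 - cos (phi t)) + (1 + cos (phi t))" by (simp add: N_def algebra_simps)
    have c1': "cos (phi t) \<le> 1" "-1 \<le> cos (phi t)" by simp_all
    show ?thesis
    proof (cases "cos (phi t) = -1")
      case True then show ?thesis using e b0 by simp
    next
      case False
      then have "0 < 1 + cos (phi t)" using c1' by linarith
      moreover have "0 \<le> b * (1 - cos (phi t))" using b0 c1' by simp
      ultimately show ?thesis using e by linarith
    qed
  qed
  define z where "z = (\<lambda>t. b * (1 - cos (phi t)) / N t)"
  define dz where "dz = (\<lambda>t. -2 * b / A * sin (phi t) * R t / (N t)\<^sup>2)"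
  define Fw where "Fw = (\<lambda>x. Q / 3 - 4 * c1 * x - 3 * c3 * x\<^sup>2 - 8 / 3 * c5 * x ^ 3)"
  have Nnz: "b + 1 + (1 - b) * cos (phi t) \<noteq> 0" for t using N0[of t] by (simp add: N_def)
  have zD: "(z has_real_derivative dz t) (at t)" for t
    unfolding z_def N_def dz_def
    apply (rule derivative_eq_intros phiD refl)+
    subgoal by (rule Nnz)
    subgoal using Nnz[of t] A0 by (simp add: field_simps power2_eq_square)
    done
  have Q6: "6*P*b\<^sup>2 = 6*c1+3*c3+2*c5" using Qb Q_def by linarith
  have Q3: "3*P*b\<^sup>2 = (6*c1+3*c3+2*c5)/2"
  proof -
    have "3*P*b\<^sup>2 = (6*P*b\<^sup>2)/2" by simp
    then show ?thesis unfolding Q6 .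
  qed
  have c1e: "c1 = (6*P*b\<^sup>2 - KK)/2" unfolding Q6 KK_def by simp
  have c3e: "c3 = 2*KK - 6*P*b\<^sup>2 - 2*P" unfolding Q6 using KK_def P_def by linarith
  have c5e: "c5 = 3*P + 3*P*b\<^sup>2 - 3*KK/2" unfolding Q3 by (simp add: KK_def P_def field_simps)
  have Qe: "Q = 6*P*b\<^sup>2" by (rule Qb)
  have dzD: "(dz has_real_derivative Fw (z t)) (at t)" for t
    unfolding dz_def N_def
    apply (rule derivative_eq_intros phiD RD refl)+
    subgoal using Nnz[of t] by simp
    subgoal unfolding Fw_def z_def N_def c1e c3e c5e Qe
      by (rule dz_alg[OF _ R2 Nnz A0 A2 _ P0 b0]) (simp_all add: kk k2_def)
    done
  define En where "En = (\<lambda>t. 6 * (u' t)\<^sup>2 + 6 * c1 * (u t)\<^sup>2 + 3 * c3 * (u t) ^ 4 + 2 * c5 * (u t) ^ 6)"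
  have EnD: "(En has_real_derivative 0) (at t)" for t
    unfolding En_def
    apply (rule derivative_eq_intros du ddu refl)+
    apply (simp add: algebra_simps power2_eq_square power3_eq_cube)
    done
  have En_c: "En t = Q" for t
  proof -
    have "En t = En 0" using DERIV_isconst_all[of En t 0] EnD by blast
    then show ?thesis by (simp add: En_def init_u init_du Q_def)
  qed
  have u'sq: "(u' t)\<^sup>2 = Q / 6 - c1 * (u t)\<^sup>2 - c3 * (u t) ^ 4 / 2 - c5 * (u t) ^ 6 / 3" for t
    using En_c[of t] unfolding En_def by linarith
  define w where "w = (\<lambda>t. (u t)\<^sup>2)"
  define dw where "dw = (\<lambda>t. 2 * u t * u' t)"
  have wD: "(w has_real_derivative dw t) (at t)" for t
    unfolding w_def dw_def
    by (rule derivative_eq_intros du refl)+ simp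
  have dwD: "(dw has_real_derivative Fw (w t)) (at t)" for t
  proof -
    have d: "(dw has_real_derivative 2 * (u' t)\<^sup>2 + 2 * u t * (- (c1 * u t + c3 * (u t) ^ 3 + c5 * (u t) ^ 5))) (at t)"
      unfolding dw_def
      by (rule derivative_eq_intros du ddu refl)+ (simp add: algebra_simps power2_eq_square)
    have e2: "u t * (c1 * u t + c3 * (u t) ^ 3 + c5 * (u t) ^ 5) = c1 * (u t)\<^sup>2 + c3 * (u t) ^ 4 + c5 * (u t) ^ 6"
      by algebra
    have e3: "Fw (w t) = Q / 3 - 4 * c1 * (u t)\<^sup>2 - 3 * c3 * (u t) ^ 4 - 8 / 3 * c5 * (u t) ^ 6"
      unfolding Fw_def w_def by algebra
    have "2 * (u' t)\<^sup>2 + 2 * u t * (- (c1 * u t + c3 * (u t) ^ 3 + c5 * (u t) ^ 5)) = Fw (w t)"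
      using u'sq[of t] e2 e3 by (simp add: algebra_simps)
    with d show ?thesis by simp
  qed
  have FwD: "(Fw has_real_derivative (- 4 * c1 - 6 * c3 * x - 8 * c5 * x\<^sup>2)) (at x)" for x
    unfolding Fw_def
    by (rule derivative_eq_intros refl)+ (simp add: algebra_simps power2_eq_square)
  have FwC: "continuous_on UNIV (\<lambda>x. - 4 * c1 - 6 * c3 * x - 8 * c5 * x\<^sup>2)"
    by (intro continuous_intros)
  have am_sh: "jacobi_am (s + 2 * Kc) k = jacobi_am s k + pi" for s
    unfolding Kc_def by (rule am_shift[OF hk])
  have am0: "jacobi_am 0 k = 0" by (rule am_0[OF hk])
  have amm2: "jacobi_am (- 2 * Kc) k = - pi" using am_sh[of "- 2 * Kc"] am0 by simp
  have amm4: "jacobi_am (- 4 * Kc) k = - 2 * pi" using am_sh[of "- 4 * Kc"] amm2 by simp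
  have amm6: "jacobi_am (- 6 * Kc) k = - 3 * pi" using am_sh[of "- 6 * Kc"] amm4 by simp
  have phi0: "phi 0 = pi" using am_sh[of 0] am0 by (simp add: phi_def)
  define t1 where "t1 = T / 4"
  have t1A: "t1 / A = 2 * Kc" using A0 by (simp add: t1_def T_def)
  have t10: "t1 > 0" using T0 by (simp add: t1_def)
  have phi1: "phi t1 = 0" using am0 t1A by (simp add: phi_def)
  have phi3: "phi (3 * t1) = - 2 * pi"
  proof -
    have e: "3 * t1 / A = 3 * (t1 / A)" by simp
    have ee: "2 * Kc - 3 * t1 / A = - 4 * Kc" using t1A e by linarith
    show ?thesis unfolding phi_def ee by (rule amm4)
  qed
  have phi4: "phi (4 * t1) = - 3 * pi"
  proof -
    have e: "4 * t1 / A = 4 * (t1 / A)" by simp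
    have ee: "2 * Kc - 4 * t1 / A = - 6 * Kc" using t1A e by linarith
    show ?thesis unfolding phi_def ee by (rule amm6)
  qed
  have phi_dec: "phi t' < phi t" if "t < t'" for t t'
  proof -
    have "2 * Kc - t' / A < 2 * Kc - t / A" using that A0 by (simp add: divide_strict_right_mono)
    then show ?thesis unfolding phi_def by (rule am_less[OF hk])
  qed
  have phi_le: "phi t' \<le> phi t" if "t \<le> t'" for t t'
    using phi_dec[of t t'] that by (cases "t = t'") auto
  have z0: "z 0 = 1" using phi0 b0 by (simp add: z_def N_def)
  have dz0: "dz 0 = 0" using phi0 by (simp add: dz_def)
  have wz: "w t = z t" for t
    by (rule ode2_unique[OF wD dwD zD dzD FwD FwC, of 0]) (simp_all add: w_def dw_def z0 dz0 init_u init_du)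
  have usq: "(u t)\<^sup>2 = b * (1 - cos (phi t)) / N t" for t
    using wz[of t] by (simp add: w_def z_def)
  have unz: "u t \<noteq> 0" if "cos (phi t) \<noteq> 1" for t
  proof
    assume "u t = 0"
    then have "b * (1 - cos (phi t)) / N t = 0" using usq[of t] by simp
    then show False using that b0 N0[of t] by simp
  qed
  have uz: "u t = 0" if "cos (phi t) = 1" for t
    using usq[of t] that by simp
  have ucont: "isCont u x" for x using du[of x] by (rule DERIV_isCont)
  have T4: "T = 4 * t1" by (simp add: t1_def)
  have nz1: "cos (phi t) \<noteq> 1" if "0 \<le> t" "t < t1" for t
  proof -
    have "phi t1 < phi t" using phi_dec that by simp
    moreover have "phi t \<le> phi 0" using phi_le that by simp
    ultimately have "0 < phi t" "phi t \<le> pi" using phi0 phi1 by auto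
    then show ?thesis by (intro cos_ne1[of 0]) auto
  qed
  have nz2: "cos (phi t) \<noteq> 1" if "t1 < t" "t < 3 * t1" for t
  proof -
    have "phi t < phi t1" using phi_dec that by simp
    moreover have "phi (3 * t1) < phi t" using phi_dec that by simp
    ultimately have "- 2 * pi < phi t" "phi t < 0" using phi3 phi1 by auto
    then show ?thesis by (intro cos_ne1[of "-1"]) auto
  qed
  have nz3: "cos (phi t) \<noteq> 1" if "3 * t1 < t" "t \<le> 4 * t1" for t
  proof -
    have "phi t < phi (3 * t1)" using phi_dec that by simp
    moreover have "phi (4 * t1) \<le> phi t" using phi_le that by simp
    ultimately have "- 3 * pi \<le> phi t" "phi t < - 2 * pi" using phi3 phi4 by auto
    then show ?thesis using pi_gt_zero by (intro cos_ne1[of "-2"]) auto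
  qed
  have ucont': "isCont (\<lambda>x. - u x) x" for x using ucont[of x] by (intro continuous_intros)
  have pos1: "u t > 0" if "0 \<le> t" "t < t1" for t
  proof (rule sign_keep[of u 0 t, OF ucont])
    fix x assume "min 0 t \<le> x" "x \<le> max 0 t"
    then show "u x \<noteq> 0" using that by (intro unz nz1) auto
  qed (simp add: init_u)
  have u1: "u t1 = 0" using phi1 by (intro uz) simp
  have u3: "u (3 * t1) = 0" using phi3 by (intro uz) simp
  have Q6p: "Q / 6 > 0" using Q0 by simp
  have du1: "u' t1 \<noteq> 0"
  proof
    assume "u' t1 = 0"
    then show False using u'sq[of t1] u1 Q6p by simp
  qed
  have du3: "u' (3 * t1) \<noteq> 0"
  proof
    assume "u' (3 * t1) = 0"
    then show False using u'sq[of "3 * t1"] u3 Q6p by simp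
  qed
  have du1n: "u' t1 < 0"
  proof (rule ccontr)
    assume "\<not> u' t1 < 0"
    then have "u' t1 > 0" using du1 by linarith
    from DERIV_pos_inc_left[OF du[of t1] this] obtain d where d: "d > 0" "\<And>h. h > 0 \<Longrightarrow> h < d \<Longrightarrow> u (t1 - h) < u t1" by blast
    define h where "h = min d t1 / 2"
    have h: "h > 0" "h < d" "h < t1" using d t10 by (auto simp: h_def)
    have "u (t1 - h) < 0" using d(2)[OF h(1,2)] u1 by simp
    moreover have "u (t1 - h) > 0" using h by (intro pos1) auto
    ultimately show False by simp
  qed
  have neg2: "u t < 0" if "t1 < t" "t < 3 * t1" for t
  proof -
    from DERIV_neg_dec_right[OF du[of t1] du1n] obtain d where d: "d > 0" "\<And>h. h > 0 \<Longrightarrow> h < d \<Longrightarrow> u t1 > u (t1 + h)" by blast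
    define h where "h = min d t1 / 2"
    have h: "h > 0" "h < d" "h < t1" using d t10 by (auto simp: h_def)
    have a: "- u (t1 + h) > 0" using d(2)[OF h(1,2)] u1 by simp
    have "(\<lambda>x. - u x) t > 0"
    proof (rule sign_keep[of "\<lambda>x. - u x" "t1 + h" t, OF ucont'])
      fix x assume "min (t1 + h) t \<le> x" "x \<le> max (t1 + h) t"
      then have "t1 < x" "x < 3 * t1" using that h by auto
      then show "- u x \<noteq> 0" using unz nz2 by simp
    qed (use a in simp)
    then show ?thesis by simp
  qed
  have du3p: "u' (3 * t1) > 0"
  proof (rule ccontr)
    assume "\<not> u' (3 * t1) > 0"
    then have "u' (3 * t1) < 0" using du3 by linarith
    from DERIV_neg_dec_left[OF du[of "3 * t1"] this] obtain d where d: "d > 0" "\<And>h. h > 0 \<Longrightarrow> h < d \<Longrightarrow> u (3 * t1) < u (3 * t1 - h)" by blast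
    define h where "h = min d t1 / 2"
    have h: "h > 0" "h < d" "h < t1" using d t10 by (auto simp: h_def)
    have "u (3 * t1 - h) > 0" using d(2)[OF h(1,2)] u3 by simp
    moreover have "u (3 * t1 - h) < 0" using h by (intro neg2) auto
    ultimately show False by simp
  qed
  have pos3: "u t > 0" if "3 * t1 < t" "t \<le> 4 * t1" for t
  proof -
    from DERIV_pos_inc_right[OF du[of "3 * t1"] du3p] obtain d where d: "d > 0" "\<And>h. h > 0 \<Longrightarrow> h < d \<Longrightarrow> u (3 * t1) < u (3 * t1 + h)" by blast
    define h where "h = min d t1 / 2"
    have h: "h > 0" "h < d" "h < t1" using d t10 by (auto simp: h_def)
    have a: "u (3 * t1 + h) > 0" using d(2)[OF h(1,2)] u3 by simp
    show ?thesis
    proof (rule sign_keep[of u "3 * t1 + h" t, OF ucont])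
      fix x assume "min (3 * t1 + h) t \<le> x" "x \<le> max (3 * t1 + h) t"
      then have "3 * t1 < x" "x \<le> 4 * t1" using that h by auto
      then show "u x \<noteq> 0" using unz nz3 by simp
    qed (use a in simp)
  qed
  have cos3: "cos (phi (4 * t1)) = -1"
  proof -
    have "phi (4 * t1) = - (real 3 * pi)" using phi4 by simp
    then show ?thesis by (simp only: cos_minus cos_npi) simp
  qed
  have uT2: "(u T)\<^sup>2 = 1" using usq[of T] cos3 b0 T4 by (simp add: N_def)
  have uTp: "u T > 0" using pos3[of T] T4 t10 by simp
  have uT: "u T = 1" using uT2 uTp by (simp add: power2_eq_1_iff)
  have du'T: "u' T = 0"
  proof -
    have h: "(u' T)\<^sup>2 = (6*c1+3*c3+2*c5)/6 - c1 - c3/2 - c5/3" using u'sq[of T] uT by (simp add: Q_def)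
    have "(u' T)\<^sup>2 = 0" using h by (simp add: field_simps)
    then show ?thesis by simp
  qed
  have per: "u (t + T) = u t" for t
  proof -
    have D1: "((\<lambda>t. u (t + T)) has_real_derivative u' (t + T)) (at t)" for t
      using du[of "t + T"] by (simp add: DERIV_shift)
    have D1': "((\<lambda>t. u' (t + T)) has_real_derivative - (c1 * u (t + T) + c3 * (u (t + T))^3 + c5 * (u (t + T))^5)) (at t)" for t
      using ddu[of "t + T"] by (simp add: DERIV_shift)
    have FD: "((\<lambda>x. - (c1 * x + c3 * x^3 + c5 * x^5)) has_real_derivative - (c1 + 3 * c3 * x\<^sup>2 + 5 * c5 * x ^ 4)) (at x)" for x
      by (rule derivative_eq_intros refl)+ (simp add: algebra_simps)
    have FC: "continuous_on UNIV (\<lambda>x. - (c1 + 3 * c3 * x\<^sup>2 + 5 * c5 * x ^ 4))"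
      by (intro continuous_intros)
    show ?thesis
      by (rule ode2_unique[where F="\<lambda>x. - (c1 * x + c3 * x^3 + c5 * x^5)", OF D1 D1' du ddu FD FC, of 0])
         (simp_all add: uT du'T init_u init_du)
  qed
  have form: "(u t)\<^sup>2 = sqrt B / (sqrt B + (cot (phi t / 2))\<^sup>2)" if "sin (phi t / 2) \<noteq> 0" for t
  proof -
    have e: "phi t = 2 * (phi t / 2)" by simp
    have "(u t)\<^sup>2 = b * (1 - cos (2 * (phi t / 2))) / ((b + 1) + (1 - b) * cos (2 * (phi t / 2)))"
      using usq[of t] unfolding N_def by (simp only: e[symmetric])
    also have "\<dots> = b / (b + (cot (phi t / 2))\<^sup>2)" by (rule cot_form[OF b0 that])
    finally show ?thesis by (simp add: b_def)
  qed
  have main: "(\<forall>t. sin (phi t / 2) \<noteq> 0 \<longrightarrow> (u t)\<^sup>2 = sqrt B / (sqrt B + (cot (phi t / 2))\<^sup>2))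
      \<and> T > 0 \<and> (\<forall>t. u (t + T) = u t)
      \<and> (\<forall>t. 0 \<le> t \<and> t < T / 4 \<longrightarrow> u t > 0)
      \<and> (\<forall>t. 3 * T / 4 < t \<and> t \<le> T \<longrightarrow> u t > 0)
      \<and> (\<forall>t. T / 4 < t \<and> t < 3 * T / 4 \<longrightarrow> u t < 0)"
    using form T0 per pos1 pos3 neg2 unfolding t1_def by auto
  show ?thesis
    using main unfolding Let_def phi_def Kc_def T_def A_def B_def k_def KK_def P_def Q_def .
qed

end
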